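(* Let $T$ be a symmetric network (so $T_{ij}=T_{ji}$ for all $i,j$) with $T_{ii}\ge \tfrac12$ for all $i\in N$, let the initial beliefs $x_0\in[0,1]^n$ be fixed, and fix $\epsilon>0$. For $q\in[0,1]$ let $T^*(q)$ be the network induced by confirmation bias $q$. Then the average convergence time $\tau$ of $T^*(q)$ is weakly monotonically increasing in $q$.
   Context: Agents $N=\{1,\dots,n\}$ communicate through a network $T$, an $n\times n$ row-stochastic matrix with entries $T_{ij}\in[0,1]$ ($T_{ij}$ is the weight agent $i$ places on agent $j$'s view; $T_{ii}$ is the self-link). $T$ is assumed strongly connected and aperiodic. Each agent $i$ has an initial belief $x_{i0}\in[0,1]$. Confirmation bias of strength $q\in[0,1]$ produces a network $T^*$ as follows: for $j\neq i$, if $|x_{i0}-x_{j0}|>1-q$ then $T^*_{ij}=0$ and the weight $T_{ij}$ is added to $i$'s self-link; otherwise $T^*_{ij}=T_{ij}$; thus $T^*_{ii}=T_{ii}+\sum_{j\ne i:\,|x_{i0}-x_{j0}|>1-q}T_{ij}$. $T^*$ is assumed strongly connected. Beliefs evolve by $x_t=T^*x_{t-1}$. For a network $P$ with stationary distribution (influence vector) $s$, i.e. the left eigenvector with $sP=s$, $\sum_i s_i=1$, the average convergence time is $\tau=\min\{t>0:\frac1n\sum_i\|P^t(i,\cdot)-s\|_2^2<\epsilon\}$, where $P^t(i,\cdot)$ is the $i$-th row of $P^t$ and $\|\cdot\|_2$ the Euclidean norm. *)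

theory Defs
  imports Complex_Main
begin

text \<open>Agents are indexed by {..<n}; a network is an n x n real matrix given as
  a function nat => nat => real (only entries with indices < n matter).\<close>

definition mat_mult :: "nat \<Rightarrow> (nat \<Rightarrow> nat \<Rightarrow> real) \<Rightarrow> (nat \<Rightarrow> nat \<Rightarrow> real) \<Rightarrow> nat \<Rightarrow> nat \<Rightarrow> real" where
  "mat_mult n A B = (\<lambda>i j. \<Sum>k<n. A i k * B k j)"

fun mat_pow :: "nat \<Rightarrow> (nat \<Rightarrow> nat \<Rightarrow> real) \<Rightarrow> nat \<Rightarrow> nat \<Rightarrow> nat \<Rightarrow> real" where
  "mat_pow n P 0 = (\<lambda>i j. if i = j then 1 else 0)"
| "mat_pow n P (Suc t) = mat_mult n (mat_pow n P t) P"

definition row_stochastic :: "nat \<Rightarrow> (nat \<Rightarrow> nat \<Rightarrow> real) \<Rightarrow> bool" where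
  "row_stochastic n P \<longleftrightarrow>
     (\<forall>i<n. \<forall>j<n. 0 \<le> P i j \<and> P i j \<le> 1) \<and> (\<forall>i<n. (\<Sum>j<n. P i j) = 1)"

definition symmetric_net :: "nat \<Rightarrow> (nat \<Rightarrow> nat \<Rightarrow> real) \<Rightarrow> bool" where
  "symmetric_net n P \<longleftrightarrow> (\<forall>i<n. \<forall>j<n. P i j = P j i)"

definition net_edges :: "nat \<Rightarrow> (nat \<Rightarrow> nat \<Rightarrow> real) \<Rightarrow> (nat \<times> nat) set" where
  "net_edges n P = {(i, j). i < n \<and> j < n \<and> 0 < P i j}"

definition strongly_connected :: "nat \<Rightarrow> (nat \<Rightarrow> nat \<Rightarrow> real) \<Rightarrow> bool" where
  "strongly_connected n P \<longleftrightarrow> (\<forall>i<n. \<forall>j<n. (i, j) \<in> (net_edges n P)\<^sup>+)"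

definition aperiodic :: "nat \<Rightarrow> (nat \<Rightarrow> nat \<Rightarrow> real) \<Rightarrow> bool" where
  "aperiodic n P \<longleftrightarrow> (\<forall>i<n. Gcd {k. 0 < k \<and> 0 < mat_pow n P k i i} = 1)"

definition Tstar :: "nat \<Rightarrow> (nat \<Rightarrow> nat \<Rightarrow> real) \<Rightarrow> (nat \<Rightarrow> real) \<Rightarrow> real \<Rightarrow> nat \<Rightarrow> nat \<Rightarrow> real" where
  "Tstar n T x q = (\<lambda>i j.
     if i = j then T i i + (\<Sum>k\<in>{k. k < n \<and> k \<noteq> i \<and> \<bar>x i - x k\<bar> > 1 - q}. T i k)
     else if \<bar>x i - x j\<bar> > 1 - q then 0 else T i j)"

text \<open>Stationary distribution (influence vector): s P = s, entries summing to 1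
  (normalised to 0 outside the index range so that it is a unique object).\<close>
definition is_stationary :: "nat \<Rightarrow> (nat \<Rightarrow> nat \<Rightarrow> real) \<Rightarrow> (nat \<Rightarrow> real) \<Rightarrow> bool" where
  "is_stationary n P s \<longleftrightarrow>
     (\<forall>j<n. (\<Sum>i<n. s i * P i j) = s j) \<and> (\<Sum>i<n. s i) = 1 \<and> (\<forall>i\<ge>n. s i = 0)"

definition influence :: "nat \<Rightarrow> (nat \<Rightarrow> nat \<Rightarrow> real) \<Rightarrow> nat \<Rightarrow> real" where
  "influence n P = (THE s. is_stationary n P s)"

definition conv_time :: "nat \<Rightarrow> (nat \<Rightarrow> nat \<Rightarrow> real) \<Rightarrow> real \<Rightarrow> nat" where
  "conv_time n P eps = (LEAST t. 0 < t \<and>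
     (1 / real n) * (\<Sum>i<n. (\<Sum>j<n. (mat_pow n P t i j - influence n P j)\<^sup>2)) < eps)"

end

theory Submission
  imports Defs "HOL-Analysis.Analysis"
begin


lemma mm_assoc: "mat_mult n (mat_mult n A B) C = mat_mult n A (mat_mult n B C)"
  unfolding mat_mult_def
  by (auto simp: sum_distrib_left sum_distrib_right mult.assoc intro!: ext sum.swap)

lemma mm_cong_left: "(\<And>k. k < n \<Longrightarrow> A i k = A' i k) \<Longrightarrow> mat_mult n A B i j = mat_mult n A' B i j"
  unfolding mat_mult_def by simp

lemma mm_cong_right: "(\<And>k. k < n \<Longrightarrow> B k j = B' k j) \<Longrightarrow> mat_mult n A B i j = mat_mult n A B' i j"
  unfolding mat_mult_def by simp

lemma mm_id_right: "j < n \<Longrightarrow> mat_mult n A (\<lambda>a b. if a = b then 1 else 0) i j = A i j"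
proof -
  assume "j < n"
  have "mat_mult n A (\<lambda>a b. if a = b then 1 else 0) i j = (\<Sum>k<n. if k = j then A i k else 0)"
    unfolding mat_mult_def by (rule sum.cong) auto
  then show ?thesis using \<open>j < n\<close> by simp
qed

lemma mm_id_left: "i < n \<Longrightarrow> mat_mult n (\<lambda>a b. if a = b then 1 else 0) A i j = A i j"
proof -
  assume "i < n"
  have "mat_mult n (\<lambda>a b. if a = b then 1 else 0) A i j = (\<Sum>k<n. if i = k then A k j else 0)"
    unfolding mat_mult_def by (rule sum.cong) auto
  then show ?thesis using \<open>i < n\<close> by simp
qed

lemma pow_add: "i < n \<Longrightarrow> j < n \<Longrightarrow>
   mat_pow n P (a + b) i j = mat_mult n (mat_pow n P a) (mat_pow n P b) i j"
proof (induction b arbitrary: i j)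
  case 0
  then show ?case by (simp add: mm_id_right)
next
  case (Suc b)
  have "mat_pow n P (a + Suc b) i j = mat_mult n (mat_pow n P (a + b)) P i j" by simp
  also have "\<dots> = mat_mult n (mat_mult n (mat_pow n P a) (mat_pow n P b)) P i j"
    by (rule mm_cong_left) (use Suc in auto)
  also have "\<dots> = mat_mult n (mat_pow n P a) (mat_pow n P (Suc b)) i j"
    by (simp add: mm_assoc)
  finally show ?case .
qed

lemma pow1: "i < n \<Longrightarrow> mat_pow n P 1 i j = P i j"
  by (simp add: mm_id_left)

lemma pow_comm: "i < n \<Longrightarrow> j < n \<Longrightarrow> mat_pow n P (Suc t) i j = mat_mult n P (mat_pow n P t) i j"
proof -
  assume a: "i < n" "j < n"
  have "mat_pow n P (Suc t) i j = mat_pow n P (1 + t) i j" by simp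
  also have "\<dots> = mat_mult n (mat_pow n P 1) (mat_pow n P t) i j" using pow_add a by blast
  also have "\<dots> = mat_mult n P (mat_pow n P t) i j"
    by (rule mm_cong_left) (use a pow1 in auto)
  finally show ?thesis .
qed

definition symm :: "nat \<Rightarrow> (nat \<Rightarrow> nat \<Rightarrow> real) \<Rightarrow> bool" where
  "symm n P \<longleftrightarrow> (\<forall>i<n. \<forall>j<n. P i j = P j i)"

lemma pow_sym: "symm n P \<Longrightarrow> i < n \<Longrightarrow> j < n \<Longrightarrow> mat_pow n P t i j = mat_pow n P t j i"
proof (induction t arbitrary: i j)
  case 0 then show ?case by simp
next
  case (Suc t)
  have "mat_pow n P (Suc t) i j = (\<Sum>k<n. mat_pow n P t i k * P k j)" by (simp add: mat_mult_def)
  also have "\<dots> = (\<Sum>k<n. P j k * mat_pow n P t k i)"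
    using Suc by (intro sum.cong) (auto simp: symm_def mult.commute)
  also have "\<dots> = mat_mult n P (mat_pow n P t) j i" by (simp add: mat_mult_def)
  also have "\<dots> = mat_pow n P (Suc t) j i" by (rule pow_comm[symmetric]) (use Suc in auto)
  finally show ?case .
qed

definition stoch :: "nat \<Rightarrow> (nat \<Rightarrow> nat \<Rightarrow> real) \<Rightarrow> bool" where
  "stoch n P \<longleftrightarrow> (\<forall>i<n. \<forall>j<n. 0 \<le> P i j) \<and> (\<forall>i<n. (\<Sum>j<n. P i j) = 1)"

lemma pow_nonneg: "stoch n P \<Longrightarrow> i < n \<Longrightarrow> j < n \<Longrightarrow> 0 \<le> mat_pow n P t i j"
  by (induction t arbitrary: i j) (auto simp: mat_mult_def stoch_def intro!: sum_nonneg)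

lemma pow_rowsum: "stoch n P \<Longrightarrow> i < n \<Longrightarrow> (\<Sum>j<n. mat_pow n P t i j) = 1"
proof (induction t arbitrary: i)
  case 0 then show ?case by simp
next
  case (Suc t)
  have "(\<Sum>j<n. mat_pow n P (Suc t) i j) = (\<Sum>k<n. mat_pow n P t i k * (\<Sum>j<n. P k j))"
    by (simp add: mat_mult_def sum_distrib_left) (rule sum.swap)
  also have "\<dots> = (\<Sum>k<n. mat_pow n P t i k)" using Suc.prems by (auto simp: stoch_def)
  finally show ?case using Suc by simp
qed

lemma pow_colsum: "stoch n P \<Longrightarrow> symm n P \<Longrightarrow> j < n \<Longrightarrow> (\<Sum>i<n. mat_pow n P t i j) = 1"
  using pow_rowsum[of n P j t] pow_sym[of n P _ j t] by simp


lemma path_pos: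
  assumes st: "stoch n P" and ij: "(i, j) \<in> (net_edges n P)\<^sup>+" and i: "i < n"
  shows "\<exists>L>0. 0 < mat_pow n P L i j"
  using ij
proof (induction rule: trancl_induct)
  case (base y)
  then show ?case using i by (intro exI[of _ 1]) (auto simp: net_edges_def mm_id_left)
next
  case (step y z)
  then obtain L where L: "L > 0" "0 < mat_pow n P L i y" by auto
  from step.hyps(2) have yz: "y < n" "z < n" "0 < P y z" by (auto simp: net_edges_def)
  have "mat_pow n P L i y * P y z \<le> (\<Sum>k<n. mat_pow n P L i k * P k z)"
    by (rule member_le_sum[where f="\<lambda>k. mat_pow n P L i k * P k z"])
       (use yz i st pow_nonneg in \<open>auto simp: stoch_def\<close>)
  moreover have "0 < mat_pow n P L i y * P y z" using L yz by simp
  ultimately show ?case by (intro exI[of _ "Suc L"]) (auto simp: mat_mult_def)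
qed

lemma pos_mono:
  assumes st: "stoch n P" and d: "\<forall>i<n. 0 < P i i" and i: "i < n" and j: "j < n"
    and p: "0 < mat_pow n P L i j" and LL: "L \<le> L'"
  shows "0 < mat_pow n P L' i j"
  using LL
proof (induction L' rule: dec_induct)
  case base then show ?case using p .
next
  case (step m)
  have "mat_pow n P m i j * P j j \<le> (\<Sum>k<n. mat_pow n P m i k * P k j)"
    by (rule member_le_sum[where f="\<lambda>k. mat_pow n P m i k * P k j"])
       (use i j st pow_nonneg in \<open>auto simp: stoch_def\<close>)
  moreover have "0 < mat_pow n P m i j * P j j" using step d j by simp
  ultimately show ?case by (auto simp: mat_mult_def)
qed

lemma pos_power:
  assumes n: "0 < n" and st: "stoch n P" and d: "\<forall>i<n. 0 < P i i"
    and sc: "strongly_connected n P"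
  shows "\<exists>K>0. \<exists>\<delta>>0. \<forall>i<n. \<forall>j<n. \<delta> \<le> mat_pow n P K i j"
proof -
  define Lf where "Lf i j = (SOME L. L > 0 \<and> 0 < mat_pow n P L i j)" for i j
  have Lf: "Lf i j > 0 \<and> 0 < mat_pow n P (Lf i j) i j" if "i < n" "j < n" for i j
  proof -
    have "\<exists>L. L > 0 \<and> 0 < mat_pow n P L i j"
      using path_pos[OF st _ that(1)] sc that by (auto simp: strongly_connected_def)
    then show ?thesis unfolding Lf_def by (rule someI_ex)
  qed
  define K where "K = (\<Sum>i<n. \<Sum>j<n. Lf i j)"
  have LK: "Lf i j \<le> K" if "i < n" "j < n" for i j
  proof -
    have "Lf i j \<le> (\<Sum>j<n. Lf i j)" by (rule member_le_sum) (use that in auto)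
    also have "\<dots> \<le> K" unfolding K_def by (rule member_le_sum[where f="\<lambda>i. \<Sum>j<n. Lf i j"]) (use that in auto)
    finally show ?thesis .
  qed
  have Kpos: "K > 0" using LK[of 0 0] Lf[of 0 0] n by auto
  have pK: "0 < mat_pow n P K i j" if "i < n" "j < n" for i j
    using pos_mono[OF st d that _ LK[OF that]] Lf[OF that] by auto
  define S where "S = (\<lambda>(i,j). mat_pow n P K i j) ` ({..<n} \<times> {..<n})"
  have fS: "finite S" "S \<noteq> {}" using n by (auto simp: S_def)
  have "Min S \<in> S" using fS by (rule Min_in)
  then have "Min S > 0" using pK by (auto simp: S_def)
  moreover have "Min S \<le> mat_pow n P K i j" if "i < n" "j < n" for i j
    using fS(1) by (rule Min_le) (use that in \<open>auto simp: S_def\<close>)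
  ultimately show ?thesis using Kpos by blast
qed

lemma contract:
  assumes Qd: "\<forall>i<n. \<forall>j<n. \<delta> \<le> Q i j" and d0: "0 \<le> \<delta>"
    and rs: "\<forall>i<n. (\<Sum>j<n. Q i j) = 1" and cs: "\<forall>j<n. (\<Sum>i<n. Q i j) = 1"
    and z: "(\<Sum>k<n. z k) = 0"
  shows "(\<Sum>j<n. (\<Sum>k<n. z k * Q k j)\<^sup>2) \<le> (1 - real n * \<delta>)\<^sup>2 * (\<Sum>k<n. (z k)\<^sup>2)"
proof -
  define R where "R k j = Q k j - \<delta>" for k j
  define c where "c = 1 - real n * \<delta>"
  have R0: "0 \<le> R k j" if "k < n" "j < n" for k j using Qd that by (auto simp: R_def)
  have Rr: "(\<Sum>j<n. R k j) = c" if "k < n" for k using rs that by (simp add: R_def sum_subtractf c_def)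
  have Rc: "(\<Sum>k<n. R k j) = c" if "j < n" for j using cs that by (simp add: R_def sum_subtractf c_def)
  have c0: "0 \<le> c"
  proof (cases "n = 0")
    case True then show ?thesis by (simp add: c_def)
  next
    case False
    then have "0 \<le> (\<Sum>j<n. R 0 j)" using R0 by (intro sum_nonneg) auto
    then show ?thesis using Rr[of 0] False by simp
  qed
  have eqR: "(\<Sum>k<n. z k * Q k j) = (\<Sum>k<n. z k * R k j)" for j
  proof -
    have "(\<Sum>k<n. z k * Q k j) = (\<Sum>k<n. z k * R k j) + \<delta> * (\<Sum>k<n. z k)"
    proof -
      have "(\<Sum>k<n. z k * Q k j) = (\<Sum>k<n. z k * R k j + \<delta> * z k)"
        by (rule sum.cong) (auto simp: R_def algebra_simps)
      then show ?thesis by (simp add: sum.distrib sum_distrib_left)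
    qed
    then show ?thesis using z by simp
  qed
  have cs1: "(\<Sum>k<n. z k * R k j)\<^sup>2 \<le> c * (\<Sum>k<n. R k j * (z k)\<^sup>2)" if j: "j < n" for j
  proof -
    have "(\<Sum>k<n. z k * R k j)\<^sup>2 = (\<Sum>k<n. sqrt (R k j) * (sqrt (R k j) * z k))\<^sup>2"
    proof (rule arg_cong[where f="\<lambda>x. x\<^sup>2"], rule sum.cong)
      fix k assume "k \<in> {..<n}"
      then have "sqrt (R k j) * sqrt (R k j) = R k j" using R0 j by simp
      then show "z k * R k j = sqrt (R k j) * (sqrt (R k j) * z k)"
        by (metis mult.assoc mult.commute)
    qed simp
    also have "\<dots> \<le> (\<Sum>k<n. (sqrt (R k j))\<^sup>2) * (\<Sum>k<n. (sqrt (R k j) * z k)\<^sup>2)"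
      by (rule Cauchy_Schwarz_ineq_sum)
    also have "\<dots> = c * (\<Sum>k<n. R k j * (z k)\<^sup>2)"
      using R0 j Rc by (simp add: power_mult_distrib)
    finally show ?thesis .
  qed
  have "(\<Sum>j<n. (\<Sum>k<n. z k * Q k j)\<^sup>2) \<le> (\<Sum>j<n. c * (\<Sum>k<n. R k j * (z k)\<^sup>2))"
    using cs1 eqR by (intro sum_mono) auto
  also have "\<dots> = c * (\<Sum>k<n. (z k)\<^sup>2 * (\<Sum>j<n. R k j))"
    by (simp add: sum_distrib_left sum_distrib_right mult.commute mult.left_commute) (rule sum.swap)
  also have "\<dots> = c * (\<Sum>k<n. (z k)\<^sup>2 * c)" using Rr by simp
  also have "\<dots> = c\<^sup>2 * (\<Sum>k<n. (z k)\<^sup>2)" by (simp add: power2_eq_square sum_distrib_left sum_distrib_right mult.commute mult.left_commute)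
  finally show ?thesis by (simp add: c_def)
qed


lemma stat_pow: "is_stationary n P s \<Longrightarrow> j < n \<Longrightarrow> (\<Sum>i<n. s i * mat_pow n P t i j) = s j"
proof (induction t arbitrary: j)
  case 0
  have "(\<Sum>i<n. s i * mat_pow n P 0 i j) = (\<Sum>i<n. if i = j then s i else 0)"
    by (rule sum.cong) auto
  then show ?case using 0 by simp
next
  case (Suc t)
  have "(\<Sum>i<n. s i * mat_pow n P (Suc t) i j) = (\<Sum>k<n. (\<Sum>i<n. s i * mat_pow n P t i k) * P k j)"
    by (simp add: mat_mult_def sum_distrib_left sum_distrib_right mult.assoc) (rule sum.swap)
  also have "\<dots> = (\<Sum>k<n. s k * P k j)" using Suc by simp
  also have "\<dots> = s j" using Suc.prems by (simp add: is_stationary_def)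
  finally show ?case .
qed

lemma influence_unif:
  assumes n: "0 < n" and st: "stoch n P" and sy: "symm n P" and d: "\<forall>i<n. 0 < P i i"
    and sc: "strongly_connected n P"
  shows "influence n P = (\<lambda>j. if j < n then 1 / real n else 0)"
  unfolding influence_def
proof (rule the_equality)
  show "is_stationary n P (\<lambda>j. if j < n then 1 / real n else 0)"
  proof -
    have "(\<Sum>i<n. 1 / real n * P i j) = 1 / real n" if "j < n" for j
      using pow_colsum[OF st sy that, of 1] that by (simp add: sum_divide_distrib[symmetric] mm_id_left)
    then show ?thesis using n by (simp add: is_stationary_def)
  qed
next
  fix s assume s: "is_stationary n P s"
  obtain K \<delta> where K: "K > 0" "\<delta> > 0" "\<forall>i<n. \<forall>j<n. \<delta> \<le> mat_pow n P K i j"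
    using pos_power[OF n st d sc] by blast
  define z where "z k = s k - 1 / real n" for k
  have zs: "(\<Sum>k<n. z k) = 0" using s n by (simp add: z_def sum_subtractf is_stationary_def)
  have zQ: "(\<Sum>k<n. z k * mat_pow n P K k j) = z j" if "j < n" for j
  proof -
    have "(\<Sum>k<n. z k * mat_pow n P K k j) = (\<Sum>k<n. s k * mat_pow n P K k j - 1 / real n * mat_pow n P K k j)"
      by (rule sum.cong) (simp_all add: z_def left_diff_distrib)
    also have "\<dots> = (\<Sum>k<n. s k * mat_pow n P K k j) - 1 / real n * (\<Sum>k<n. mat_pow n P K k j)"
      by (simp only: sum_subtractf sum_distrib_left)
    finally have "(\<Sum>k<n. z k * mat_pow n P K k j) = (\<Sum>k<n. s k * mat_pow n P K k j) - 1 / real n * (\<Sum>k<n. mat_pow n P K k j)" .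
    then show ?thesis using stat_pow[OF s that] pow_colsum[OF st sy that] by (simp add: z_def)
  qed
  have c: "(\<Sum>j<n. (z j)\<^sup>2) \<le> (1 - real n * \<delta>)\<^sup>2 * (\<Sum>k<n. (z k)\<^sup>2)"
    using contract[of n \<delta> "mat_pow n P K" z] K zs zQ pow_rowsum[OF st] pow_colsum[OF st sy] by simp
  have c0: "0 \<le> 1 - real n * \<delta>"
  proof -
    have "(\<Sum>i<n. \<delta>) \<le> (\<Sum>i<n. mat_pow n P K i 0)" using K n by (intro sum_mono) auto
    then show ?thesis using pow_colsum[OF st sy n] by simp
  qed
  have c1: "(1 - real n * \<delta>)\<^sup>2 < 1"
  proof -
    have a1: "1 - real n * \<delta> < 1" using K n by simp
    have "(1 - real n * \<delta>) * (1 - real n * \<delta>) \<le> (1 - real n * \<delta>) * 1"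
      using c0 a1 by (intro mult_left_mono) auto
    then show ?thesis using a1 by (simp add: power2_eq_square)
  qed
  have "(\<Sum>k<n. (z k)\<^sup>2) \<le> 0"
  proof (rule ccontr)
    assume "\<not> ?thesis"
    then have "0 < (\<Sum>k<n. (z k)\<^sup>2)" by simp
    then have "(1 - real n * \<delta>)\<^sup>2 * (\<Sum>k<n. (z k)\<^sup>2) < (\<Sum>k<n. (z k)\<^sup>2)" using c1 by simp
    then show False using c by simp
  qed
  then have "\<forall>k\<in>{..<n}. (z k)\<^sup>2 = 0" using sum_nonneg_eq_0_iff[of "{..<n}" "\<lambda>k. (z k)\<^sup>2"]
    by (simp add: order_antisym sum_nonneg)
  then show "s = (\<lambda>j. if j < n then 1 / real n else 0)"
    using s by (auto simp: z_def is_stationary_def)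
qed

definition dev :: "nat \<Rightarrow> (nat \<Rightarrow> nat \<Rightarrow> real) \<Rightarrow> nat \<Rightarrow> real" where
  "dev n P t = (\<Sum>i<n. \<Sum>j<n. (mat_pow n P t i j - 1 / real n)\<^sup>2)"

lemma converge:
  assumes n: "0 < n" and st: "stoch n P" and sy: "symm n P" and d: "\<forall>i<n. 0 < P i i"
    and sc: "strongly_connected n P" and e: "0 < eps"
  shows "\<exists>t>0. (1 / real n) * dev n P t < eps"
proof -
  obtain K \<delta> where K: "K > 0" "\<delta> > 0" "\<forall>i<n. \<forall>j<n. \<delta> \<le> mat_pow n P K i j"
    using pos_power[OF n st d sc] by blast
  define c where "c = (1 - real n * \<delta>)\<^sup>2"
  have c0: "0 \<le> 1 - real n * \<delta>"
  proof -
    have "(\<Sum>i<n. \<delta>) \<le> (\<Sum>i<n. mat_pow n P K i 0)" using K n by (intro sum_mono) auto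
    then show ?thesis using pow_colsum[OF st sy n] by simp
  qed
  have c1: "c < 1"
  proof -
    have a1: "1 - real n * \<delta> < 1" using K n by simp
    have "(1 - real n * \<delta>) * (1 - real n * \<delta>) \<le> (1 - real n * \<delta>) * 1"
      using c0 a1 by (intro mult_left_mono) auto
    then show ?thesis using a1 by (simp add: power2_eq_square c_def)
  qed
  have cn: "0 \<le> c" by (simp add: c_def)
  have step: "dev n P (t + K) \<le> c * dev n P t" for t
  proof -
    have row: "(\<Sum>j<n. (mat_pow n P (t + K) i j - 1 / real n)\<^sup>2) \<le> c * (\<Sum>j<n. (mat_pow n P t i j - 1 / real n)\<^sup>2)"
      if i: "i < n" for i
    proof -
      define z where "z k = mat_pow n P t i k - 1 / real n" for k
      have zs: "(\<Sum>k<n. z k) = 0" using pow_rowsum[OF st i] n by (simp add: z_def sum_subtractf)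
      have zQ: "(\<Sum>k<n. z k * mat_pow n P K k j) = mat_pow n P (t + K) i j - 1 / real n" if "j < n" for j
      proof -
        have "(\<Sum>k<n. z k * mat_pow n P K k j) = (\<Sum>k<n. mat_pow n P t i k * mat_pow n P K k j - 1 / real n * mat_pow n P K k j)"
          by (rule sum.cong) (simp_all add: z_def left_diff_distrib)
        also have "\<dots> = (\<Sum>k<n. mat_pow n P t i k * mat_pow n P K k j) - 1 / real n * (\<Sum>k<n. mat_pow n P K k j)"
          by (simp only: sum_subtractf sum_distrib_left)
        finally have "(\<Sum>k<n. z k * mat_pow n P K k j) = (\<Sum>k<n. mat_pow n P t i k * mat_pow n P K k j) - 1 / real n * (\<Sum>k<n. mat_pow n P K k j)" .
        then show ?thesis using pow_add[OF i that, of P t K] pow_colsum[OF st sy that] by (simp add: mat_mult_def)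
      qed
      have "(\<Sum>j<n. (\<Sum>k<n. z k * mat_pow n P K k j)\<^sup>2) \<le> c * (\<Sum>k<n. (z k)\<^sup>2)"
        using contract[of n \<delta> "mat_pow n P K" z] K zs pow_rowsum[OF st] pow_colsum[OF st sy] by (simp add: c_def)
      then show ?thesis using zQ by (simp add: z_def)
    qed
    have "c * dev n P t = (\<Sum>i<n. c * (\<Sum>j<n. (mat_pow n P t i j - 1 / real n)\<^sup>2))"
      by (simp add: dev_def sum_distrib_left)
    moreover have "dev n P (t + K) \<le> (\<Sum>i<n. c * (\<Sum>j<n. (mat_pow n P t i j - 1 / real n)\<^sup>2))"
      unfolding dev_def by (rule sum_mono) (rule row, simp)
    ultimately show ?thesis by simp
  qed
  have geo: "dev n P (m * K) \<le> c ^ m * dev n P 0" for m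
  proof (induction m)
    case 0 then show ?case by simp
  next
    case (Suc m)
    have "dev n P (Suc m * K) = dev n P (m * K + K)" by (simp add: add.commute)
    also have "\<dots> \<le> c * dev n P (m * K)" by (rule step)
    also have "\<dots> \<le> c * (c ^ m * dev n P 0)" using Suc cn by (rule mult_left_mono)
    finally show ?case by simp
  qed
  have d0: "0 \<le> dev n P 0" unfolding dev_def by (intro sum_nonneg) auto
  obtain m where m: "c ^ m < real n * eps / (dev n P 0 + 1)"
    using real_arch_pow_inv[OF _ c1, of "real n * eps / (dev n P 0 + 1)"] n e d0 by auto
  have "dev n P (Suc m * K) \<le> c ^ Suc m * dev n P 0" by (rule geo)
  also have "\<dots> \<le> c ^ m * dev n P 0"
    by (rule mult_right_mono[OF _ d0]) (use cn c1 in \<open>simp add: mult_left_le_one_le\<close>)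
  also have "\<dots> \<le> c ^ m * (dev n P 0 + 1)" using cn by (intro mult_left_mono) auto
  also have "\<dots> < real n * eps" using m d0 by (simp add: field_simps)
  finally have "(1 / real n) * dev n P (Suc m * K) < eps" using n by (simp add: field_simps)
  moreover have "Suc m * K > 0" using K by simp
  ultimately show ?thesis by blast
qed



lemma swap3: "(\<Sum>i\<in>I. \<Sum>l\<in>L. \<Sum>k\<in>K. f i l k) = (\<Sum>k\<in>K. \<Sum>l\<in>L. \<Sum>i\<in>I. f i l k)"
proof -
  have "(\<Sum>i\<in>I. \<Sum>l\<in>L. \<Sum>k\<in>K. f i l k) = (\<Sum>i\<in>I. \<Sum>k\<in>K. \<Sum>l\<in>L. f i l k)"
    by (rule sum.cong[OF refl], rule sum.swap)
  also have "\<dots> = (\<Sum>k\<in>K. \<Sum>i\<in>I. \<Sum>l\<in>L. f i l k)" by (rule sum.swap)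
  also have "\<dots> = (\<Sum>k\<in>K. \<Sum>l\<in>L. \<Sum>i\<in>I. f i l k)"
    by (rule sum.cong[OF refl], rule sum.swap)
  finally show ?thesis .
qed

lemma psd:
  assumes st: "stoch n M" and sy: "symm n M" and d: "\<forall>i<n. 1/2 \<le> M i i"
  shows "0 \<le> (\<Sum>p<n. \<Sum>q<n. z p * M p q * z q)"
proof -
  define G where "G p q = M p q - (if p = q then 1/2 else 0)" for p q :: nat
  have G0: "0 \<le> G p q" if "p < n" "q < n" for p q
    using st d that by (auto simp: G_def stoch_def)
  have Gr: "(\<Sum>q<n. G p q) = 1/2" if "p < n" for p
  proof -
    have "(\<Sum>q<n. G p q) = (\<Sum>q<n. M p q) - (\<Sum>q<n. if p = q then 1/2 else 0)"
      unfolding G_def by (rule sum_subtractf)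
    then show ?thesis using st that by (simp add: stoch_def)
  qed
  have Gc: "(\<Sum>p<n. G p q) = 1/2" if "q < n" for q
  proof -
    have "(\<Sum>p<n. G p q) = (\<Sum>p<n. G q p)"
      by (rule sum.cong) (use sy that in \<open>auto simp: G_def symm_def\<close>)
    then show ?thesis using Gr that by simp
  qed
  define Z where "Z = (\<Sum>p<n. (z p)\<^sup>2)"
  have "0 \<le> (\<Sum>p<n. \<Sum>q<n. G p q * (z p + z q)\<^sup>2)"
    using G0 by (intro sum_nonneg) auto
  also have "\<dots> = (\<Sum>p<n. \<Sum>q<n. G p q * (z p)\<^sup>2) + (\<Sum>p<n. \<Sum>q<n. G p q * (z q)\<^sup>2)
      + 2 * (\<Sum>p<n. \<Sum>q<n. z p * G p q * z q)"
    by (simp add: power2_sum algebra_simps sum.distrib sum_distrib_left)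
  also have "(\<Sum>p<n. \<Sum>q<n. G p q * (z p)\<^sup>2) = (\<Sum>p<n. (\<Sum>q<n. G p q) * (z p)\<^sup>2)"
    by (simp add: sum_distrib_right)
  also have "\<dots> = Z / 2" unfolding Z_def sum_divide_distrib by (rule sum.cong) (use Gr in auto)
  also have "(\<Sum>p<n. \<Sum>q<n. G p q * (z q)\<^sup>2) = (\<Sum>q<n. (\<Sum>p<n. G p q) * (z q)\<^sup>2)"
    by (subst sum.swap) (simp add: sum_distrib_right)
  also have "\<dots> = Z / 2" unfolding Z_def sum_divide_distrib by (rule sum.cong) (use Gc in auto)
  also have "(\<Sum>p<n. \<Sum>q<n. z p * G p q * z q) = (\<Sum>p<n. \<Sum>q<n. z p * M p q * z q) - Z / 2"
  proof -
    have "(\<Sum>p<n. \<Sum>q<n. z p * G p q * z q) = (\<Sum>p<n. (\<Sum>q<n. z p * M p q * z q) - (z p)\<^sup>2 / 2)"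
    proof (rule sum.cong[OF refl])
      fix p assume p: "p \<in> {..<n}"
      have "(\<Sum>q<n. z p * G p q * z q) = (\<Sum>q<n. z p * M p q * z q - (if p = q then (z p)\<^sup>2 / 2 else 0))"
        by (rule sum.cong) (auto simp: G_def algebra_simps power2_eq_square)
      also have "\<dots> = (\<Sum>q<n. z p * M p q * z q) - (z p)\<^sup>2 / 2"
        using p by (simp add: sum_subtractf)
      finally show "(\<Sum>q<n. z p * G p q * z q) = (\<Sum>q<n. z p * M p q * z q) - (z p)\<^sup>2 / 2" .
    qed
    then show ?thesis by (simp add: sum_subtractf Z_def sum_divide_distrib)
  qed
  finally show ?thesis by simp
qed


lemma sum4: "(\<Sum>p\<in>P. \<Sum>q\<in>Q. F p q - G p q - H p q + E p q) =
  (\<Sum>p\<in>P. \<Sum>q\<in>Q. F p q) - (\<Sum>p\<in>P. \<Sum>q\<in>Q. G p q) - (\<Sum>p\<in>P. \<Sum>q\<in>Q. H p q) + (\<Sum>p\<in>P. \<Sum>q\<in>Q. (E p q :: real))"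
  by (simp add: sum.distrib sum_subtractf)

lemma powX:
  assumes st: "stoch n M" and sy: "symm n M" and d: "\<forall>i<n. 1/2 \<le> M i i"
    and k: "k < n" and l: "l < n"
  shows "2 * mat_pow n M r k l \<le> mat_pow n M r k k + mat_pow n M r l l"
proof -
  define u where "u = r div 2"
  define N where "N = mat_pow n M u"
  have Nsym: "N a b = N b a" if "a < n" "b < n" for a b
    using pow_sym[OF sy that] by (simp add: N_def)
  show ?thesis
  proof (cases "even r")
    case True
    then have r: "r = u + u" by (auto simp: u_def)
    have X: "mat_pow n M r a b = (\<Sum>p<n. N a p * N b p)" if "a < n" "b < n" for a b
    proof -
      have "mat_pow n M r a b = (\<Sum>p<n. N a p * N p b)"
        using pow_add[OF that, of M u u] r by (simp add: mat_mult_def N_def)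
      also have "\<dots> = (\<Sum>p<n. N a p * N b p)"
        by (rule sum.cong) (use Nsym that in auto)
      finally show ?thesis .
    qed
    have "0 \<le> (\<Sum>p<n. (N k p - N l p)\<^sup>2)" by (intro sum_nonneg) auto
    also have "(\<Sum>p<n. (N k p - N l p)\<^sup>2) = (\<Sum>p<n. N k p * N k p + N l p * N l p - 2 * (N k p * N l p))"
      by (rule sum.cong) (auto simp: power2_eq_square algebra_simps)
    also have "\<dots> = (\<Sum>p<n. N k p * N k p) + (\<Sum>p<n. N l p * N l p) - 2 * (\<Sum>p<n. N k p * N l p)"
      by (simp add: sum.distrib sum_subtractf sum_distrib_left)
    finally show ?thesis using X k l by simp
  next
    case False
    then have r: "r = u + Suc u" by (auto simp: u_def elim: oddE)
    define Y where "Y a b = (\<Sum>p<n. \<Sum>q<n. N a p * M p q * N b q)" for a b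
    have X: "mat_pow n M r a b = Y a b" if "a < n" "b < n" for a b
    proof -
      have "mat_pow n M r a b = mat_mult n N (mat_pow n M (Suc u)) a b"
        using pow_add[OF that, of M u "Suc u"] r by (simp add: N_def)
      also have "\<dots> = mat_mult n N (mat_mult n M N) a b"
        by (rule mm_cong_right) (use pow_comm that in \<open>auto simp: N_def\<close>)
      also have "\<dots> = Y a b" unfolding Y_def mat_mult_def sum_distrib_left
        by (rule sum.cong[OF refl], rule sum.cong[OF refl]) (use Nsym that in \<open>auto simp: mult.assoc\<close>)
      finally show ?thesis .
    qed
    have "0 \<le> (\<Sum>p<n. \<Sum>q<n. (N k p - N l p) * M p q * (N k q - N l q))"
      using psd[OF st sy d, of "\<lambda>p. N k p - N l p"] by simp
    also have "\<dots> = (\<Sum>p<n. \<Sum>q<n. N k p * M p q * N k q - N k p * M p q * N l q - N l p * M p q * N k q + N l p * M p q * N l q)"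
      by (intro sum.cong refl) (simp add: algebra_simps)
    also have "\<dots> = Y k k - Y k l - Y l k + Y l l" unfolding sum4 Y_def ..
    finally have "0 \<le> Y k k - Y k l - Y l k + Y l l" .
    moreover have "mat_pow n M r k l = mat_pow n M r l k" by (rule pow_sym[OF sy k l])
    ultimately show ?thesis using X k l by simp
  qed
qed

lemma lap:
  assumes sy: "symm n D" and rs: "\<forall>k<n. (\<Sum>l<n. D k l) = 0"
    and od: "\<forall>k<n. \<forall>l<n. k \<noteq> l \<longrightarrow> D k l \<le> 0"
    and X: "\<forall>k<n. \<forall>l<n. 2 * X k l \<le> X k k + X l l"
  shows "0 \<le> (\<Sum>k<n. \<Sum>l<n. D k l * X k l)"
proof -
  have s1: "(\<Sum>k<n. \<Sum>l<n. D k l * X k k) = 0"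
  proof -
    have "(\<Sum>k<n. \<Sum>l<n. D k l * X k k) = (\<Sum>k<n. (\<Sum>l<n. D k l) * X k k)"
      by (simp add: sum_distrib_right)
    then show ?thesis using rs by simp
  qed
  have s2: "(\<Sum>k<n. \<Sum>l<n. D k l * X l l) = 0"
  proof -
    have "(\<Sum>k<n. \<Sum>l<n. D k l * X l l) = (\<Sum>l<n. (\<Sum>k<n. D k l) * X l l)"
      by (subst sum.swap) (simp add: sum_distrib_right)
    also have "\<dots> = (\<Sum>l<n. (\<Sum>k<n. D l k) * X l l)"
      by (intro sum.cong refl arg_cong2[where f="(*)"]) (use sy in \<open>auto simp: symm_def\<close>)
    finally show ?thesis using rs by simp
  qed
  have "(\<Sum>k<n. \<Sum>l<n. D k l * (X k k + X l l - 2 * X k l)) \<le> 0"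
  proof (intro sum_nonpos)
    fix k l assume "k \<in> {..<n}" "l \<in> {..<n}"
    then show "D k l * (X k k + X l l - 2 * X k l) \<le> 0"
      using od X by (cases "k = l") (auto simp: mult_nonpos_nonneg)
  qed
  moreover have "(\<Sum>k<n. \<Sum>l<n. D k l * (X k k + X l l - 2 * X k l)) =
      (\<Sum>k<n. \<Sum>l<n. D k l * X k k) + (\<Sum>k<n. \<Sum>l<n. D k l * X l l) - 2 * (\<Sum>k<n. \<Sum>l<n. D k l * X k l)"
    by (simp add: algebra_simps sum.distrib sum_subtractf sum_distrib_left)
  ultimately show ?thesis using s1 s2 by simp
qed

lemma traceT:
  assumes sy: "symm n M"
  shows "(\<Sum>i<n. \<Sum>j<n. mat_pow n M t i j * mat_mult n (mat_mult n (mat_pow n M a) D) (mat_pow n M b) i j)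
    = (\<Sum>k<n. \<Sum>l<n. D k l * mat_pow n M (a + t + b) k l)"
proof -
  define Y where "Y = mat_mult n (mat_pow n M a) D"
  have "(\<Sum>i<n. \<Sum>j<n. mat_pow n M t i j * mat_mult n Y (mat_pow n M b) i j)
      = (\<Sum>i<n. \<Sum>j<n. \<Sum>l<n. Y i l * (mat_pow n M t i j * mat_pow n M b l j))"
    by (simp add: mat_mult_def sum_distrib_left mult_ac)
  also have "\<dots> = (\<Sum>i<n. \<Sum>l<n. \<Sum>j<n. Y i l * (mat_pow n M t i j * mat_pow n M b l j))"
    by (rule sum.cong[OF refl], rule sum.swap)
  also have "\<dots> = (\<Sum>i<n. \<Sum>l<n. Y i l * mat_pow n M (t + b) i l)"
  proof (intro sum.cong refl)
    fix i l assume il: "i \<in> {..<n}" "l \<in> {..<n}"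
    have "(\<Sum>j<n. Y i l * (mat_pow n M t i j * mat_pow n M b l j)) = Y i l * (\<Sum>j<n. mat_pow n M t i j * mat_pow n M b j l)"
      unfolding sum_distrib_left by (rule sum.cong) (use il pow_sym[OF sy] in auto)
    also have "\<dots> = Y i l * mat_pow n M (t + b) i l"
      using pow_add[of i n l M t b] il by (simp add: mat_mult_def)
    finally show "(\<Sum>j<n. Y i l * (mat_pow n M t i j * mat_pow n M b l j)) = Y i l * mat_pow n M (t + b) i l" .
  qed
  also have "\<dots> = (\<Sum>i<n. \<Sum>l<n. \<Sum>k<n. D k l * (mat_pow n M a i k * mat_pow n M (t + b) i l))"
    by (simp add: Y_def mat_mult_def sum_distrib_left sum_distrib_right mult_ac)
  also have "\<dots> = (\<Sum>k<n. \<Sum>l<n. \<Sum>i<n. D k l * (mat_pow n M a i k * mat_pow n M (t + b) i l))"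
    by (rule swap3)
  also have "\<dots> = (\<Sum>k<n. \<Sum>l<n. D k l * mat_pow n M (a + t + b) k l)"
  proof (intro sum.cong refl)
    fix k l assume kl: "k \<in> {..<n}" "l \<in> {..<n}"
    have "(\<Sum>i<n. D k l * (mat_pow n M a i k * mat_pow n M (t + b) i l)) = D k l * (\<Sum>i<n. mat_pow n M a k i * mat_pow n M (t + b) i l)"
      unfolding sum_distrib_left by (rule sum.cong) (use kl pow_sym[OF sy] in auto)
    also have "\<dots> = D k l * mat_pow n M (a + (t + b)) k l"
      using pow_add[of k n l M a "t + b"] kl by (simp add: mat_mult_def)
    finally show "(\<Sum>i<n. D k l * (mat_pow n M a i k * mat_pow n M (t + b) i l)) = D k l * mat_pow n M (a + t + b) k l"
      by (simp add: add.assoc)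
  qed
  finally show ?thesis by (simp add: Y_def)
qed


fun dp :: "nat \<Rightarrow> (nat \<Rightarrow> nat \<Rightarrow> real) \<Rightarrow> (nat \<Rightarrow> nat \<Rightarrow> real) \<Rightarrow> nat \<Rightarrow> nat \<Rightarrow> nat \<Rightarrow> real" where
  "dp n M D 0 = (\<lambda>i j. 0)"
| "dp n M D (Suc t) = (\<lambda>i j. mat_mult n (dp n M D t) M i j + mat_mult n (mat_pow n M t) D i j)"

lemma dp_deriv:
  "((\<lambda>s. mat_pow n (\<lambda>i j. A i j + s * D i j) t i j) has_real_derivative
      dp n (\<lambda>i j. A i j + s * D i j) D t i j) (at s)"
proof (induction t arbitrary: i j)
  case 0 then show ?case by simp
next
  case (Suc t)
  define C where "C s = (\<lambda>i j. A i j + s * D i j)" for s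
  have IH: "((\<lambda>s. mat_pow n (C s) t i k) has_real_derivative dp n (C s) D t i k) (at s)" for i k
    using Suc.IH unfolding C_def .
  have dv: "((\<lambda>s. \<Sum>k<n. mat_pow n (C s) t i k * (A k j + s * D k j)) has_real_derivative
     (\<Sum>k<n. mat_pow n (C s) t i k * D k j + dp n (C s) D t i k * (A k j + s * D k j))) (at s)"
  proof (rule DERIV_sum)
    fix k
    have "((\<lambda>s. A k j + s * D k j) has_real_derivative D k j) (at s)"
      by (auto intro!: derivative_eq_intros)
    then show "((\<lambda>s. mat_pow n (C s) t i k * (A k j + s * D k j)) has_real_derivative
     mat_pow n (C s) t i k * D k j + dp n (C s) D t i k * (A k j + s * D k j)) (at s)"
      by (rule DERIV_mult'[OF IH])
  qed
  have e1: "(\<lambda>s. mat_pow n (C s) (Suc t) i j) = (\<lambda>s. \<Sum>k<n. mat_pow n (C s) t i k * (A k j + s * D k j))"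
    by (simp add: mat_mult_def C_def)
  have e2: "dp n (C s) D (Suc t) i j = (\<Sum>k<n. mat_pow n (C s) t i k * D k j + dp n (C s) D t i k * (A k j + s * D k j))"
    by (simp add: mat_mult_def sum.distrib C_def add.commute)
  have "((\<lambda>s. mat_pow n (C s) (Suc t) i j) has_real_derivative dp n (C s) D (Suc t) i j) (at s)"
    unfolding e1 e2 by (rule dv)
  then show ?case unfolding C_def .
qed

lemma dp_closed:
  assumes "i < n" "j < n"
  shows "dp n M D t i j = (\<Sum>a<t. mat_mult n (mat_mult n (mat_pow n M a) D) (mat_pow n M (t - 1 - a)) i j)"
  using assms
proof (induction t arbitrary: i j)
  case 0 then show ?case by simp
next
  case (Suc t)
  have "mat_mult n (dp n M D t) M i j =
     mat_mult n (\<lambda>i j. \<Sum>a<t. mat_mult n (mat_mult n (mat_pow n M a) D) (mat_pow n M (t - 1 - a)) i j) M i j"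
    by (rule mm_cong_left) (use Suc in auto)
  also have "\<dots> = (\<Sum>a<t. mat_mult n (mat_mult n (mat_mult n (mat_pow n M a) D) (mat_pow n M (t - 1 - a))) M i j)"
    by (simp add: mat_mult_def sum_distrib_right) (rule sum.swap)
  also have "\<dots> = (\<Sum>a<t. mat_mult n (mat_mult n (mat_pow n M a) D) (mat_pow n M (Suc t - 1 - a)) i j)"
  proof (rule sum.cong[OF refl])
    fix a assume "a \<in> {..<t}"
    then have "Suc t - 1 - a = Suc (t - 1 - a)" by auto
    then show "mat_mult n (mat_mult n (mat_mult n (mat_pow n M a) D) (mat_pow n M (t - 1 - a))) M i j =
      mat_mult n (mat_mult n (mat_pow n M a) D) (mat_pow n M (Suc t - 1 - a)) i j"
      by (simp add: mm_assoc)
  qed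
  finally have 1: "mat_mult n (dp n M D t) M i j = \<dots>" .
  have 2: "mat_mult n (mat_pow n M t) D i j = mat_mult n (mat_mult n (mat_pow n M t) D) (mat_pow n M (Suc t - 1 - t)) i j"
    using Suc.prems by (simp add: mm_id_right)
  have "dp n M D (Suc t) i j = mat_mult n (dp n M D t) M i j + mat_mult n (mat_pow n M t) D i j" by simp
  also have "\<dots> = (\<Sum>a<t. mat_mult n (mat_mult n (mat_pow n M a) D) (mat_pow n M (Suc t - 1 - a)) i j)
     + mat_mult n (mat_mult n (mat_pow n M t) D) (mat_pow n M (Suc t - 1 - t)) i j"
    by (subst 1, subst 2, rule refl)
  also have "\<dots> = (\<Sum>a<Suc t. mat_mult n (mat_mult n (mat_pow n M a) D) (mat_pow n M (Suc t - 1 - a)) i j)"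
    by (simp only: sum.lessThan_Suc)
  finally show ?case .
qed


lemma mono_F:
  assumes stA: "stoch n A" and syA: "symm n A" and dA: "\<forall>i<n. 1/2 \<le> A i i"
    and stB: "stoch n B" and syB: "symm n B" and dB: "\<forall>i<n. 1/2 \<le> B i i"
    and od: "\<forall>i<n. \<forall>j<n. i \<noteq> j \<longrightarrow> B i j \<le> A i j"
  shows "(\<Sum>i<n. \<Sum>j<n. (mat_pow n A t i j)\<^sup>2) \<le> (\<Sum>i<n. \<Sum>j<n. (mat_pow n B t i j)\<^sup>2)"
proof -
  define D where "D i j = B i j - A i j" for i j
  define C where "C s = (\<lambda>i j. A i j + s * D i j)" for s
  define g where "g s = (\<Sum>i<n. \<Sum>j<n. (mat_pow n (C s) t i j)\<^sup>2)" for s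
  define g' where "g' s = (\<Sum>i<n. \<Sum>j<n. 2 * mat_pow n (C s) t i j * dp n (C s) D t i j)" for s
  have der: "(g has_real_derivative g' s) (at s)" for s
    unfolding g_def g'_def
  proof (intro DERIV_sum)
    fix i j
    have dd: "((\<lambda>s. mat_pow n (C s) t i j) has_real_derivative dp n (C s) D t i j) (at s)"
      unfolding C_def by (rule dp_deriv)
    have "((\<lambda>s. mat_pow n (C s) t i j * mat_pow n (C s) t i j) has_real_derivative
       dp n (C s) D t i j * mat_pow n (C s) t i j + dp n (C s) D t i j * mat_pow n (C s) t i j) (at s)"
      by (rule DERIV_mult[OF dd dd])
    moreover have "dp n (C s) D t i j * mat_pow n (C s) t i j + dp n (C s) D t i j * mat_pow n (C s) t i j
       = 2 * mat_pow n (C s) t i j * dp n (C s) D t i j" by simp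
    ultimately show "((\<lambda>s. (mat_pow n (C s) t i j)\<^sup>2) has_real_derivative
       2 * mat_pow n (C s) t i j * dp n (C s) D t i j) (at s)" by (simp add: power2_eq_square)
  qed
  have Dsy: "symm n D" using syA syB by (auto simp: symm_def D_def)
  have Drs: "\<forall>k<n. (\<Sum>l<n. D k l) = 0"
    using stA stB by (auto simp: stoch_def D_def sum_subtractf)
  have Dod: "\<forall>k<n. \<forall>l<n. k \<noteq> l \<longrightarrow> D k l \<le> 0" using od by (auto simp: D_def)
  have Cp: "stoch n (C s) \<and> symm n (C s) \<and> (\<forall>i<n. 1/2 \<le> C s i i)" if s: "0 \<le> s" "s \<le> 1" for s
  proof (intro conjI)
    have cv: "C s i j = (1 - s) * A i j + s * B i j" for i j by (simp add: C_def D_def algebra_simps)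
    show "stoch n (C s)"
    proof -
      have "0 \<le> C s i j" if "i < n" "j < n" for i j
        using stA stB that s unfolding cv stoch_def by (auto intro!: add_nonneg_nonneg mult_nonneg_nonneg)
      moreover have "(\<Sum>j<n. C s i j) = 1" if "i < n" for i
        using stA stB that unfolding cv stoch_def by (simp add: sum.distrib sum_distrib_left[symmetric])
      ultimately show ?thesis by (auto simp: stoch_def)
    qed
    show "symm n (C s)" using syA syB by (auto simp: symm_def cv)
    show "\<forall>i<n. 1/2 \<le> C s i i"
    proof (intro allI impI)
      fix i assume i: "i < n"
      have "(1 - s) * (1/2) + s * (1/2) \<le> (1 - s) * A i i + s * B i i"
        using dA dB i s by (intro add_mono mult_left_mono) auto
      then show "1/2 \<le> C s i i" unfolding cv by argo
    qed
  qed
  have nn: "0 \<le> g' s" if s: "0 \<le> s" "s \<le> 1" for s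
  proof -
    define M where "M = C s"
    have M: "stoch n M" "symm n M" "\<forall>i<n. 1/2 \<le> M i i" using Cp[OF s] by (auto simp: M_def)
    have "g' s = 2 * (\<Sum>i<n. \<Sum>j<n. mat_pow n M t i j * (\<Sum>a<t. mat_mult n (mat_mult n (mat_pow n M a) D) (mat_pow n M (t - 1 - a)) i j))"
      unfolding g'_def M_def[symmetric] sum_distrib_left
      by (intro sum.cong refl) (simp add: dp_closed sum_distrib_left mult.assoc)
    also have "\<dots> = 2 * (\<Sum>a<t. \<Sum>i<n. \<Sum>j<n. mat_pow n M t i j * mat_mult n (mat_mult n (mat_pow n M a) D) (mat_pow n M (t - 1 - a)) i j)"
    proof -
      define Y where "Y a i j = mat_mult n (mat_mult n (mat_pow n M a) D) (mat_pow n M (t - 1 - a)) i j" for a i j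
      have "(\<Sum>i<n. \<Sum>j<n. mat_pow n M t i j * (\<Sum>a<t. Y a i j)) = (\<Sum>i<n. \<Sum>j<n. \<Sum>a<t. mat_pow n M t i j * Y a i j)"
        by (simp add: sum_distrib_left)
      also have "\<dots> = (\<Sum>i<n. \<Sum>a<t. \<Sum>j<n. mat_pow n M t i j * Y a i j)"
        by (rule sum.cong[OF refl], rule sum.swap)
      also have "\<dots> = (\<Sum>a<t. \<Sum>i<n. \<Sum>j<n. mat_pow n M t i j * Y a i j)"
        by (rule sum.swap)
      finally show ?thesis unfolding Y_def by simp
    qed
    also have "\<dots> = 2 * (\<Sum>a<t. \<Sum>k<n. \<Sum>l<n. D k l * mat_pow n M (a + t + (t - 1 - a)) k l)"
      by (simp add: traceT[OF M(2)])
    also have "\<dots> \<ge> 0"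
    proof -
      have "0 \<le> (\<Sum>k<n. \<Sum>l<n. D k l * mat_pow n M r k l)" for r
        using lap[OF Dsy Drs Dod, of "mat_pow n M r"] powX[OF M] by blast
      then have "0 \<le> (\<Sum>a<t. \<Sum>k<n. \<Sum>l<n. D k l * mat_pow n M (a + t + (t - 1 - a)) k l)"
        by (rule sum_nonneg)
      then show ?thesis by simp
    qed
    finally show ?thesis .
  qed
  have "g 0 \<le> g 1"
    by (rule DERIV_nonneg_imp_nondecreasing[of 0 1 g]) (use der nn in auto)
  moreover have "C 0 = A" "C 1 = B" by (auto simp: C_def D_def)
  ultimately show ?thesis by (simp add: g_def)
qed



lemma tstar_props:
  assumes st: "stoch n T" and sy: "symm n T" and d: "\<forall>i<n. 1/2 \<le> T i i"
  shows "stoch n (Tstar n T x q) \<and> symm n (Tstar n T x q) \<and> (\<forall>i<n. 1/2 \<le> Tstar n T x q i i)"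
proof -
  define cut where "cut i k = (\<bar>x i - x k\<bar> > 1 - q)" for i k
  define X where "X i = (\<Sum>k\<in>{k. k < n \<and> k \<noteq> i \<and> \<bar>x i - x k\<bar> > 1 - q}. T i k)" for i
  have X0: "0 \<le> X i" if "i < n" for i
    unfolding X_def using st that by (intro sum_nonneg) (auto simp: stoch_def)
  have Xs: "X i = (\<Sum>j<n. if j \<noteq> i \<and> cut i j then T i j else 0)" for i
  proof -
    have e: "{k. k < n \<and> k \<noteq> i \<and> \<bar>x i - x k\<bar> > 1 - q} = {k \<in> {..<n}. k \<noteq> i \<and> cut i k}"
      by (auto simp: cut_def)
    show ?thesis unfolding X_def e by (rule sum.inter_filter) simp
  qed
  have ts: "Tstar n T x q i j = T i j + (if j = i then X i else 0) - (if j \<noteq> i \<and> cut i j then T i j else 0)" for i j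
    by (auto simp: Tstar_def X_def cut_def)
  have diag: "\<forall>i<n. 1/2 \<le> Tstar n T x q i i"
  proof (intro allI impI)
    fix i assume i: "i < n"
    then have "1/2 \<le> T i i" "0 \<le> X i" using d X0 by auto
    then show "1/2 \<le> Tstar n T x q i i" by (simp add: ts)
  qed
  have nonneg: "0 \<le> Tstar n T x q i j" if "i < n" "j < n" for i j
    using st that X0 by (auto simp: ts stoch_def)
  have rs: "(\<Sum>j<n. Tstar n T x q i j) = 1" if i: "i < n" for i
  proof -
    have "(\<Sum>j<n. Tstar n T x q i j) = (\<Sum>j<n. T i j) + (\<Sum>j<n. if j = i then X i else 0) - X i"
      unfolding ts Xs by (simp add: sum.distrib sum_subtractf)
    then show ?thesis using st i by (simp add: stoch_def)
  qed
  have sym: "symm n (Tstar n T x q)"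
    using sy by (auto simp: symm_def Tstar_def abs_minus_commute)
  show ?thesis using diag nonneg rs sym by (auto simp: stoch_def)
qed

lemma tstar_od:
  assumes "q1 \<le> q2" "i \<noteq> j" "0 \<le> T i j"
  shows "Tstar n T x q2 i j \<le> Tstar n T x q1 i j"
  using assms by (auto simp: Tstar_def)

lemma dev_eq:
  assumes n: "0 < n" and st: "stoch n P"
  shows "dev n P t = (\<Sum>i<n. \<Sum>j<n. (mat_pow n P t i j)\<^sup>2) - 1"
proof -
  have row: "(\<Sum>j<n. (mat_pow n P t i j - 1 / real n)\<^sup>2) = (\<Sum>j<n. (mat_pow n P t i j)\<^sup>2) - 1 / real n"
    if i: "i < n" for i
  proof -
    define c where "c = 1 / real n"
    have "(\<Sum>j<n. (mat_pow n P t i j - 1 / real n)\<^sup>2) =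
       (\<Sum>j<n. (mat_pow n P t i j)\<^sup>2 - 2 * c * mat_pow n P t i j + c\<^sup>2)"
      by (rule sum.cong) (auto simp: power2_diff c_def)
    also have "\<dots> = (\<Sum>j<n. (mat_pow n P t i j)\<^sup>2) - 2 * c * (\<Sum>j<n. mat_pow n P t i j) + real n * c\<^sup>2"
      by (simp add: sum.distrib sum_subtractf sum_distrib_left)
    also have "\<dots> = (\<Sum>j<n. (mat_pow n P t i j)\<^sup>2) - 1 / real n"
      using pow_rowsum[OF st i] n by (simp add: power2_eq_square c_def)
    finally show ?thesis .
  qed
  have "dev n P t = (\<Sum>i<n. (\<Sum>j<n. (mat_pow n P t i j)\<^sup>2) - 1 / real n)"
    unfolding dev_def by (rule sum.cong) (use row in auto)
  also have "\<dots> = (\<Sum>i<n. \<Sum>j<n. (mat_pow n P t i j)\<^sup>2) - 1"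
    using n by (simp add: sum_subtractf)
  finally show ?thesis .
qed

theorem theorem1:
  fixes n :: nat and T :: "nat \<Rightarrow> nat \<Rightarrow> real" and x :: "nat \<Rightarrow> real"
    and eps q1 q2 :: real
  assumes "0 < n"
    and "row_stochastic n T"
    and "strongly_connected n T"
    and "aperiodic n T"
    and "symmetric_net n T"
    and "\<forall>i<n. T i i \<ge> 1 / 2"
    and "\<forall>i<n. 0 \<le> x i \<and> x i \<le> 1"
    and "0 < eps"
    and "0 \<le> q1" and "q1 \<le> q2" and "q2 \<le> 1"
    and "strongly_connected n (Tstar n T x q1)"
    and "strongly_connected n (Tstar n T x q2)"
  shows "conv_time n (Tstar n T x q1) eps \<le> conv_time n (Tstar n T x q2) eps"
proof -
  note n = assms(1)
  have st: "stoch n T" using assms(2) by (auto simp: row_stochastic_def stoch_def)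
  have sy: "symm n T" using assms(5) by (auto simp: symmetric_net_def symm_def)
  have d: "\<forall>i<n. 1/2 \<le> T i i" using assms(6) by auto
  define P1 where "P1 = Tstar n T x q1"
  define P2 where "P2 = Tstar n T x q2"
  have p1: "stoch n P1" "symm n P1" "\<forall>i<n. 1/2 \<le> P1 i i"
    using tstar_props[OF st sy d] unfolding P1_def by auto
  have p2: "stoch n P2" "symm n P2" "\<forall>i<n. 1/2 \<le> P2 i i"
    using tstar_props[OF st sy d] unfolding P2_def by auto
  have d1: "\<forall>i<n. 0 < P1 i i" using p1(3) by (auto intro: less_le_trans[of 0 "1/2"])
  have d2: "\<forall>i<n. 0 < P2 i i" using p2(3) by (auto intro: less_le_trans[of 0 "1/2"])
  have sc1: "strongly_connected n P1" using assms(12) by (simp add: P1_def)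
  have sc2: "strongly_connected n P2" using assms(13) by (simp add: P2_def)
  have od: "\<forall>i<n. \<forall>j<n. i \<noteq> j \<longrightarrow> P2 i j \<le> P1 i j"
    using tstar_od[OF assms(10)] st unfolding P1_def P2_def stoch_def by blast
  have inf: "(1 / real n) * (\<Sum>i<n. \<Sum>j<n. (mat_pow n P t i j - influence n P j)\<^sup>2) = (1 / real n) * dev n P t"
    if "stoch n P" "symm n P" "\<forall>i<n. 0 < P i i" "strongly_connected n P" for P t
    unfolding influence_unif[OF n that] dev_def by simp
  have F: "dev n P1 t \<le> dev n P2 t" for t
    using mono_F[OF p1 p2 od, of t] dev_eq[OF n p1(1)] dev_eq[OF n p2(1)] by simp
  define S1 where "S1 t = (0 < t \<and> (1 / real n) * dev n P1 t < eps)" for t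
  define S2 where "S2 t = (0 < t \<and> (1 / real n) * dev n P2 t < eps)" for t
  have c1: "conv_time n P1 eps = (LEAST t. S1 t)"
    unfolding conv_time_def S1_def inf[OF p1(1,2) d1 sc1] ..
  have c2: "conv_time n P2 eps = (LEAST t. S2 t)"
    unfolding conv_time_def S2_def inf[OF p2(1,2) d2 sc2] ..
  obtain t0 where "S2 t0" using converge[OF n p2(1,2) d2 sc2 assms(8)] by (auto simp: S2_def)
  then have "S2 (LEAST t. S2 t)" by (rule LeastI)
  then have "S1 (LEAST t. S2 t)"
    using F[of "LEAST t. S2 t"] n divide_right_mono[OF F[of "LEAST t. S2 t"], of "real n"] unfolding S1_def S2_def
    by auto
  then have "(LEAST t. S1 t) \<le> (LEAST t. S2 t)" by (rule Least_le)
  then show ?thesis using c1 c2 by (simp add: P1_def P2_def)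
qed

end
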